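(* Let $N\in\mathbb N$, let $A\in\mathbb R^{N\times N}$ be invertible and let $p<1$. Suppose that $A^{-1}\ge 0$ entrywise and that $(A^{-1})_{ii}>0$ for all $i=1,\dots,N$. Then the equation $Ax=x^{p}$ has a solution $x\in\mathbb R^N$ with $x>0$.
   Context: Inequalities between vectors and matrices are understood componentwise. For $x\in(0,\infty)^N$ and $p\in\mathbb R$, $x^p:=(x_1^p,\dots,x_N^p)^\top$. *)

theory Defs
  imports "HOL-Analysis.Analysis"
begin

end

theory Submission
  imports Defs
begin

lemma box_fix:
  fixes F :: "real ^ 'n \<Rightarrow> real ^ 'n" and l :: "real ^ 'n" and b :: real
  assumes "\<forall>i. l $ i \<le> b"
    and "continuous_on (cbox l (vec b)) F"
    and "\<And>x. x \<in> cbox l (vec b) \<Longrightarrow> F x \<in> cbox l (vec b)"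
  shows "\<exists>x \<in> cbox l (vec b). F x = x"
proof -
  have "l \<in> cbox l (vec b)" using assms(1) by (simp add: mem_box_cart)
  then have ne: "cbox l (vec b) \<noteq> {}" by blast
  show ?thesis
    by (rule brouwer[OF compact_cbox convex_box(1) ne assms(2)]) (use assms(3) in auto)
qed

lemma inv_right:
  fixes A :: "real ^ 'n ^ 'n"
  assumes "invertible A"
  shows "A ** matrix_inv A = mat 1"
proof -
  have "\<exists>A'::real^'n^'n. A ** A' = mat 1 \<and> A' ** A = mat 1" using assms by (simp add: invertible_def)
  from someI_ex[OF this] show ?thesis unfolding matrix_inv_def by blast
qed

theorem lemma3p1:
  fixes A :: "real ^ 'n ^ 'n" and p :: real
  assumes "invertible A"
    and "p < 1"
    and "\<forall>i j. matrix_inv A $ i $ j \<ge> 0"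
    and "\<forall>i. matrix_inv A $ i $ i > 0"
  shows "\<exists>x :: real ^ 'n. (\<forall>i. x $ i > 0) \<and> A *v x = (\<chi> i. (x $ i) powr p)"
proof -
  define B where "B = matrix_inv A"
  have B0: "\<And>i j. B $ i $ j \<ge> 0" using assms(3) B_def by auto
  have Bd: "\<And>i. B $ i $ i > 0" using assms(4) B_def by auto
  define th where "th = 1 / (1 - p)"
  have th0: "th > 0" using assms(2) th_def by simp
  have th1: "th * (1 - p) = 1" using assms(2) th_def by simp
  define l where "l = (\<chi> i. (B $ i $ i) powr th)"
  have l0: "\<And>i. l $ i > 0" using Bd unfolding l_def by (simp add: less_imp_neq[symmetric])
  define L where "L = (\<Sum>i\<in>UNIV. l $ i)"
  have lL: "\<And>i. l $ i \<le> L"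
    unfolding L_def by (rule member_le_sum) (use l0 less_imp_le in auto)
  have L0: "L \<ge> 0" using lL[of undefined] l0[of undefined] by linarith
  have rowsum_le: "\<And>i (g :: 'n \<Rightarrow> real) K. (\<And>j. 0 \<le> g j) \<Longrightarrow> (\<And>j. g j \<le> K) \<Longrightarrow>
      (\<Sum>j\<in>UNIV. B $ i $ j * g j) \<le> (\<Sum>j\<in>UNIV. B $ i $ j) * K"
    by (simp add: sum_distrib_right mult_left_mono B0 sum_mono)
  have single: "\<And>i (g :: 'n \<Rightarrow> real). (\<And>j. 0 \<le> g j) \<Longrightarrow>
      B $ i $ i * g i \<le> (\<Sum>j\<in>UNIV. B $ i $ j * g j)"
    by (rule member_le_sum[of _ _ "\<lambda>j. B $ i $ j * g j" for i g, simplified]) (use B0 in auto)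
  have key: "\<exists>x. (\<forall>i. x $ i > 0) \<and> x = B *v (\<chi> i. (x $ i) powr p)"
  proof (cases "p \<ge> 0")
    case True
    define F where "F = (\<lambda>x::real^'n. \<chi> i. \<Sum>j\<in>UNIV. B $ i $ j * (x $ j) powr p)"
    define M where "M = (\<Sum>i\<in>UNIV. \<Sum>j\<in>UNIV. B $ i $ j)"
    have RM: "\<And>i. (\<Sum>j\<in>UNIV. B $ i $ j) \<le> M"
      unfolding M_def by (rule member_le_sum) (auto intro: sum_nonneg B0)
    have M0: "M > 0" using RM[of undefined] single[of "\<lambda>_. 1" undefined] Bd[of undefined] by simp
    define b where "b = L + M powr th"
    have lb: "\<forall>i. l $ i \<le> b" using lL b_def by (simp add: add_increasing2)
    have b0: "b > 0" using lb l0 by (meson less_le_trans)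
    have Mb: "M \<le> b powr (1 - p)"
    proof -
      have "M = (M powr th) powr (1 - p)" using M0 th1 by (simp add: powr_powr)
      also have "\<dots> \<le> b powr (1 - p)"
        using assms(2) L0 b_def by (intro powr_mono2) auto
      finally show ?thesis .
    qed
    obtain x where x: "x \<in> cbox l (vec b)" "F x = x"
    proof -
      have "\<exists>x \<in> cbox l (vec b). F x = x"
      proof (rule box_fix[OF lb])
        show "continuous_on (cbox l (vec b)) F"
          unfolding F_def
          by (intro continuous_intros) (auto simp: mem_box_cart, metis l0 less_le_trans less_irrefl)
        fix x assume x: "x \<in> cbox l (vec b)"
        hence xl: "\<And>i. l $ i \<le> x $ i" and xb: "\<And>i. x $ i \<le> b" by (auto simp: mem_box_cart)
        have xp: "\<And>i. x $ i > 0" using xl l0 less_le_trans by blast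
        show "F x \<in> cbox l (vec b)" unfolding mem_box_cart
        proof (intro allI conjI)
          fix i
          have "th = 1 + th * p" using th1 by (simp add: algebra_simps)
          then have "l $ i = B $ i $ i powr (1 + th * p)" by (simp add: l_def)
          also have "\<dots> = B $ i $ i * (l $ i) powr p"
            using Bd[of i] by (simp add: l_def powr_powr powr_add)
          also have "\<dots> \<le> B $ i $ i * (x $ i) powr p"
            using Bd[of i] xl[of i] l0[of i] True by (intro mult_left_mono powr_mono2) auto
          also have "\<dots> \<le> F x $ i" unfolding F_def using single[of "\<lambda>j. x $ j powr p" i] by simp
          finally show "l $ i \<le> F x $ i" .
          have "F x $ i \<le> (\<Sum>j\<in>UNIV. B $ i $ j) * b powr p"
            unfolding F_def using rowsum_le[of "\<lambda>j. x $ j powr p" "b powr p" i]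
              xb xp True by (simp add: powr_mono2 less_imp_le)
          also have "\<dots> \<le> M * b powr p" using RM[of i] by (simp add: mult_right_mono)
          also have "\<dots> \<le> b powr (1 - p) * b powr p" using Mb by (simp add: mult_right_mono)
          also have "\<dots> = b" using b0 by (simp add: powr_add[symmetric])
          finally show "F x $ i \<le> vec b $ i" by simp
        qed
      qed
      then show ?thesis using that by blast
    qed
    have "\<forall>i. x $ i > 0" using x(1) l0 by (auto simp: mem_box_cart intro: less_le_trans)
    moreover have "x = B *v (\<chi> i. (x $ i) powr p)"
      using x(2) unfolding F_def by (simp add: matrix_vector_mult_def vec_eq_iff)
    ultimately show ?thesis by blast
  next
    case False
    define F where "F = (\<lambda>x::real^'n. \<chi> i. ((\<Sum>j\<in>UNIV. B $ i $ j * (x $ j) powr p) * (x $ i) powr (-p)) powr th)"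
    define K where "K = (\<Sum>i\<in>UNIV. \<Sum>j\<in>UNIV. B $ i $ j * (l $ j) powr p)"
    have RK: "\<And>i. (\<Sum>j\<in>UNIV. B $ i $ j * (l $ j) powr p) \<le> K"
      unfolding K_def by (rule member_le_sum) (auto intro!: sum_nonneg mult_nonneg_nonneg B0)
    define b where "b = L + K"
    have K0: "K \<ge> 0" unfolding K_def by (auto intro!: sum_nonneg mult_nonneg_nonneg B0)
    have lb: "\<forall>i. l $ i \<le> b" using lL b_def K0 by (simp add: add_increasing2)
    have b0: "b > 0" using lb l0 by (meson less_le_trans)
    have Kb: "K \<le> b" using b_def lL[of undefined] l0[of undefined] by simp
    obtain x where x: "x \<in> cbox l (vec b)" "F x = x"
    proof -
      have "\<exists>x \<in> cbox l (vec b). F x = x"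
      proof (rule box_fix[OF lb])
        have pos: "\<And>x j. x \<in> cbox l (vec b) \<Longrightarrow> x $ j > 0"
          using l0 by (auto simp: mem_box_cart intro: less_le_trans)
        have S0: "\<And>x i. x \<in> cbox l (vec b) \<Longrightarrow> (\<Sum>j\<in>UNIV. B $ i $ j * (x $ j) powr p) > 0"
        proof -
          fix x i assume xin: "x \<in> cbox l (vec b)"
          have "B $ i $ i * (x $ i) powr p > 0" using Bd[of i] pos[OF xin, of i] by simp
          also have "\<dots> \<le> (\<Sum>j\<in>UNIV. B $ i $ j * (x $ j) powr p)" using single[of "\<lambda>j. x $ j powr p" i] by simp
          finally show "(\<Sum>j\<in>UNIV. B $ i $ j * (x $ j) powr p) > 0" .
        qed
        have nz1: "\<forall>x\<in>cbox l (vec b). x $ j \<noteq> 0" for j using pos by (metis less_irrefl)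
        have nz2: "\<forall>x\<in>cbox l (vec b). (\<Sum>j\<in>UNIV. B $ i $ j * x $ j powr p) * x $ i powr - p \<noteq> 0" for i
        proof
          fix x assume xin: "x \<in> cbox l (vec b)"
          have "0 < (\<Sum>j\<in>UNIV. B $ i $ j * x $ j powr p) * x $ i powr - p"
            using S0[OF xin, of i] pos[OF xin, of i] by (intro mult_pos_pos) auto
          then show "(\<Sum>j\<in>UNIV. B $ i $ j * x $ j powr p) * x $ i powr - p \<noteq> 0" by (metis less_irrefl)
        qed
        show "continuous_on (cbox l (vec b)) F"
          unfolding F_def
          by (intro continuous_intros) (use nz1 nz2 in blast)+
        fix x assume x: "x \<in> cbox l (vec b)"
        hence xl: "\<And>i. l $ i \<le> x $ i" and xb: "\<And>i. x $ i \<le> b" by (auto simp: mem_box_cart)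
        have xp: "\<And>i. x $ i > 0" using xl l0 less_le_trans by blast
        show "F x \<in> cbox l (vec b)" unfolding mem_box_cart
        proof (intro allI conjI)
          fix i
          have "B $ i $ i = B $ i $ i * (x $ i) powr p * (x $ i) powr (-p)"
            using xp[of i] by (simp add: powr_add[symmetric])
          also have "\<dots> \<le> (\<Sum>j\<in>UNIV. B $ i $ j * (x $ j) powr p) * (x $ i) powr (-p)"
            using single[of "\<lambda>j. x $ j powr p" i] by (simp add: mult_right_mono)
          finally have "B $ i $ i powr th \<le> ((\<Sum>j\<in>UNIV. B $ i $ j * (x $ j) powr p) * (x $ i) powr (-p)) powr th"
            using Bd[of i] th0 by (intro powr_mono2) auto
          then show "l $ i \<le> F x $ i" unfolding F_def l_def by simp
          have "(\<Sum>j\<in>UNIV. B $ i $ j * (x $ j) powr p) \<le> (\<Sum>j\<in>UNIV. B $ i $ j * (l $ j) powr p)"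
            using False xl l0 by (intro sum_mono mult_left_mono B0 powr_mono2') auto
          also have "\<dots> \<le> b" using RK[of i] Kb by simp
          finally have s: "(\<Sum>j\<in>UNIV. B $ i $ j * (x $ j) powr p) \<le> b" .
          have "(\<Sum>j\<in>UNIV. B $ i $ j * (x $ j) powr p) * (x $ i) powr (-p) \<le> b * b powr (-p)"
            using s xb[of i] xp[of i] False b0 by (intro mult_mono powr_mono2) auto
          also have "\<dots> = b powr 1 * b powr (-p)" using b0 by simp
          also have "\<dots> = b powr (1 + -p)" by (simp only: powr_add)
          also have "\<dots> = b powr (1 - p)" by simp
          finally have "((\<Sum>j\<in>UNIV. B $ i $ j * (x $ j) powr p) * (x $ i) powr (-p)) powr th \<le> (b powr (1 - p)) powr th"
            using th0 S0[OF x, of i] xp[of i] by (intro powr_mono2) auto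
          also have "\<dots> = b powr ((1 - p) * th)" by (simp only: powr_powr)
          also have "\<dots> = b" using b0 th1 by (simp add: mult.commute)
          finally show "F x $ i \<le> vec b $ i" unfolding F_def by simp
        qed
      qed
      then show ?thesis using that by blast
    qed
    have xp: "\<forall>i. x $ i > 0" using x(1) l0 by (auto simp: mem_box_cart intro: less_le_trans)
    have xeq: "x $ i = (\<Sum>j\<in>UNIV. B $ i $ j * (x $ j) powr p)" for i
    proof -
      define S where "S = (\<Sum>j\<in>UNIV. B $ i $ j * (x $ j) powr p)"
      have S0: "S > 0"
      proof -
        have "B $ i $ i * (x $ i) powr p > 0" using Bd[of i] xp[rule_format, of i] by simp
        also have "\<dots> \<le> S" using single[of "\<lambda>j. x $ j powr p" i] S_def by simp
        finally show ?thesis .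
      qed
      have "F x $ i = x $ i" using x(2) by simp
      then have xe: "x $ i = (S * (x $ i) powr (-p)) powr th" unfolding F_def S_def by simp
      have Sx: "S * (x $ i) powr (-p) > 0" using S0 xp[rule_format, of i] by (intro mult_pos_pos) auto
      have "x $ i powr (1 - p) = ((S * (x $ i) powr (-p)) powr th) powr (1 - p)"
        using xe by simp
      also have "\<dots> = S * (x $ i) powr (-p)"
        using Sx th1 by (simp add: powr_powr)
      finally have "x $ i powr (1 - p) = S * (x $ i) powr (-p)" .
      moreover have "x $ i powr (1 - p) = x $ i * (x $ i) powr (-p)"
      proof -
        have "x $ i * (x $ i) powr (-p) = x $ i powr 1 * x $ i powr (-p)" using xp[rule_format, of i] by simp
        also have "\<dots> = x $ i powr (1 + -p)" by (simp only: powr_add)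
        finally show ?thesis by simp
      qed
      ultimately have "x $ i * (x $ i) powr (-p) = S * (x $ i) powr (-p)" by simp
      moreover have "(x $ i) powr (-p) \<noteq> 0" using xp[rule_format, of i] by simp
      ultimately have "x $ i = S" by simp
      then show ?thesis unfolding S_def .
    qed
    have "x = B *v (\<chi> i. (x $ i) powr p)"
    proof (subst vec_eq_iff, intro allI)
      fix i
      have "(B *v (\<chi> i. (x $ i) powr p)) $ i = (\<Sum>j\<in>UNIV. B $ i $ j * (x $ j) powr p)"
        by (simp add: matrix_vector_mult_def)
      then show "x $ i = (B *v (\<chi> i. (x $ i) powr p)) $ i" using xeq[of i] by simp
    qed
    with xp show ?thesis by blast
  qed
  then obtain x where x: "\<forall>i. x $ i > 0" "x = B *v (\<chi> i. (x $ i) powr p)" by blast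
  have "A *v x = A *v (B *v (\<chi> i. (x $ i) powr p))"
    using x(2) by (rule arg_cong)
  also have "\<dots> = (A ** B) *v (\<chi> i. (x $ i) powr p)"
    by (rule matrix_vector_mul_assoc)
  also have "\<dots> = (\<chi> i. (x $ i) powr p)" using inv_right[OF assms(1)] B_def by simp
  finally show ?thesis using x(1) by blast
qed

end
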